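(* Let $H$ and $H'$ be hypergraphs. If $H'$ dilutes to $H$ (i.e., $H$ is a hypergraph dilution of $H'$), then $\mathrm{ghw}(H) \leq \mathrm{ghw}(H')$.
   Context: A hypergraph $H$ is a pair $(V(H),E(H))$ with $E(H)\subseteq 2^{V(H)}$ a set of hyperedges (so identical edges coincide). For a vertex $v$, $I_v$ denotes the set of edges containing $v$. A hypergraph $H$ is a hypergraph dilution of $H'$ (equivalently, $H'$ dilutes to $H$) if $H$ is isomorphic to a hypergraph reachable from $H'$ by a finite sequence of the following operations: (1) deleting a vertex (from the vertex set and from all edges); (2) deleting an edge that is a proper subset of another edge; (3) merging on a vertex $v$: replacing all edges in $I_v$ by the single new edge $(\bigcup I_v)\setminus\{v\}$. A tree decomposition of $H$ is a pair $(T,(B_u)_{u\in T})$ with $T$ a tree and $B_u\subseteq V(H)$ such that every edge of $H$ is contained in some $B_u$ and for every vertex $v$ the set $\{u : v\in B_u\}$ is connected in $T$. For $B\subseteq V(H)$, $\rho_H(B)$ is the minimum number of edges of $H$ whose union contains $B$. The generalised hypertree width $\mathrm{ghw}(H)$ is the minimum over all tree decompositions of $\max_u \rho_H(B_u)$. *)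

theory Defs
  imports Main "HOL-Library.Extended_Nat"
begin

type_synonym 'a hypergraph = "'a set \<times> 'a set set"

definition verts :: "'a hypergraph \<Rightarrow> 'a set" where "verts H = fst H"
definition edges :: "'a hypergraph \<Rightarrow> 'a set set" where "edges H = snd H"

definition hypergraph :: "'a hypergraph \<Rightarrow> bool" where
  "hypergraph H \<longleftrightarrow> finite (verts H) \<and> (\<forall>e\<in>edges H. e \<subseteq> verts H)"

definition incident :: "'a hypergraph \<Rightarrow> 'a \<Rightarrow> 'a set set" where
  "incident H v = {e \<in> edges H. v \<in> e}"

inductive dilute_step :: "'a hypergraph \<Rightarrow> 'a hypergraph \<Rightarrow> bool" where
  del_vertex: "v \<in> verts H \<Longrightarrow>
     dilute_step H (verts H - {v}, (\<lambda>e. e - {v}) ` edges H)"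
| del_edge: "e \<in> edges H \<Longrightarrow> f \<in> edges H \<Longrightarrow> e \<subset> f \<Longrightarrow>
     dilute_step H (verts H, edges H - {e})"
| merge: "v \<in> verts H \<Longrightarrow>
     dilute_step H (verts H, (edges H - incident H v) \<union> {\<Union>(incident H v) - {v}})"

definition hg_iso :: "'a hypergraph \<Rightarrow> 'b hypergraph \<Rightarrow> bool" where
  "hg_iso H G \<longleftrightarrow> (\<exists>f. bij_betw f (verts H) (verts G) \<and> edges G = (\<lambda>e. f ` e) ` edges H)"

definition dilution :: "'a hypergraph \<Rightarrow> 'b hypergraph \<Rightarrow> bool" where
  "dilution H H' \<longleftrightarrow> (\<exists>G. dilute_step\<^sup>*\<^sup>* H' G \<and> hg_iso H G)"

definition adj :: "nat set set \<Rightarrow> nat \<Rightarrow> nat \<Rightarrow> bool" where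
  "adj TE x y \<longleftrightarrow> {x, y} \<in> TE \<and> x \<noteq> y"

definition connected_on :: "nat set set \<Rightarrow> nat set \<Rightarrow> bool" where
  "connected_on TE S \<longleftrightarrow>
     (\<forall>x\<in>S. \<forall>y\<in>S. (\<lambda>a b. a \<in> S \<and> b \<in> S \<and> adj TE a b)\<^sup>*\<^sup>* x y)"

definition has_cycle :: "nat set set \<Rightarrow> bool" where
  "has_cycle TE \<longleftrightarrow> (\<exists>cs. length cs \<ge> 3 \<and> distinct cs \<and>
      (\<forall>i. Suc i < length cs \<longrightarrow> adj TE (cs ! i) (cs ! Suc i)) \<and>
      adj TE (last cs) (hd cs))"

definition is_tree :: "nat set \<Rightarrow> nat set set \<Rightarrow> bool" where
  "is_tree N TE \<longleftrightarrow> finite N \<and> N \<noteq> {} \<and>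
     (\<forall>e\<in>TE. \<exists>x y. x \<in> N \<and> y \<in> N \<and> x \<noteq> y \<and> e = {x, y}) \<and>
     connected_on TE N \<and> \<not> has_cycle TE"

definition tree_decomposition ::
  "'a hypergraph \<Rightarrow> nat set \<Rightarrow> nat set set \<Rightarrow> (nat \<Rightarrow> 'a set) \<Rightarrow> bool" where
  "tree_decomposition H N TE B \<longleftrightarrow> is_tree N TE \<and>
     (\<forall>u\<in>N. B u \<subseteq> verts H) \<and>
     (\<forall>e\<in>edges H. \<exists>u\<in>N. e \<subseteq> B u) \<and>
     (\<forall>v\<in>verts H. connected_on TE {u \<in> N. v \<in> B u})"

(* rho_H(X): minimum number of edges covering X (infinity if impossible) *)
definition rho :: "'a hypergraph \<Rightarrow> 'a set \<Rightarrow> enat" where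
  "rho H X = (INF F \<in> {F. F \<subseteq> edges H \<and> finite F \<and> X \<subseteq> \<Union>F}. enat (card F))"

definition ghw :: "'a hypergraph \<Rightarrow> enat" where
  "ghw H = (INF D \<in> {(N, TE, B). tree_decomposition H N TE B}.
              (case D of (N, TE, B) \<Rightarrow> (SUP u \<in> N. rho H (B u))))"

end

theory Submission
  imports Defs
begin

lemma ghw_le_crit:
  assumes "\<And>N TE B. tree_decomposition H' N TE B \<Longrightarrow>
     \<exists>B2. tree_decomposition H N TE B2 \<and> (\<forall>u\<in>N. rho H (B2 u) \<le> rho H' (B u))"
  shows "ghw H \<le> ghw H'"
proof -
  define W where "W = (\<lambda>D. case D of (N::nat set, TE::nat set set, B) \<Rightarrow> SUP u\<in>N. rho H (B u))"
  define W' where "W' = (\<lambda>D. case D of (N::nat set, TE::nat set set, B) \<Rightarrow> SUP u\<in>N. rho H' (B u))"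
  have g1: "ghw H = (INF D\<in>{(N, TE, B). tree_decomposition H N TE B}. W D)"
    unfolding ghw_def W_def by (rule refl)
  have g2: "ghw H' = (INF D\<in>{(N, TE, B). tree_decomposition H' N TE B}. W' D)"
    unfolding ghw_def W'_def by (rule refl)
  have "(INF D\<in>{(N, TE, B). tree_decomposition H N TE B}. W D)
      \<le> (INF D\<in>{(N, TE, B). tree_decomposition H' N TE B}. W' D)"
  proof (rule INF_greatest)
    fix D assume "D \<in> {(N, TE, B). tree_decomposition H' N TE B}"
    then obtain N TE B where D: "D = (N, TE, B)" and td: "tree_decomposition H' N TE B" by auto
    from assms[OF td] obtain B2 where td2: "tree_decomposition H N TE B2"
      and le: "\<forall>u\<in>N. rho H (B2 u) \<le> rho H' (B u)" by blast
    have mem: "(N, TE, B2) \<in> {(N, TE, B). tree_decomposition H N TE B}" using td2 by simp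
    have "(INF D\<in>{(N, TE, B). tree_decomposition H N TE B}. W D) \<le> W (N, TE, B2)"
      using mem by (rule INF_lower)
    also have "W (N, TE, B2) = (SUP u\<in>N. rho H (B2 u))" by (simp add: W_def)
    also have "\<dots> \<le> (SUP u\<in>N. rho H' (B u))"
    proof (rule SUP_mono)
      fix n assume "n \<in> N" then show "\<exists>m\<in>N. rho H (B2 n) \<le> rho H' (B m)" using le by blast
    qed
    also have "\<dots> = W' D" by (simp add: W'_def D)
    finally show "(INF D\<in>{(N, TE, B). tree_decomposition H N TE B}. W D) \<le> W' D" .
  qed
  then show ?thesis using g1 g2 by simp
qed

lemma rho_le_crit:
  assumes "\<And>F. F \<subseteq> edges H' \<Longrightarrow> finite F \<Longrightarrow> Y \<subseteq> \<Union>F \<Longrightarrow>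
     \<exists>F2. F2 \<subseteq> edges H \<and> finite F2 \<and> X \<subseteq> \<Union>F2 \<and> card F2 \<le> card F"
  shows "rho H X \<le> rho H' Y"
  unfolding rho_def
proof (rule INF_mono)
  fix F assume "F \<in> {F. F \<subseteq> edges H' \<and> finite F \<and> Y \<subseteq> \<Union> F}"
  then have "F \<subseteq> edges H'" "finite F" "Y \<subseteq> \<Union>F" by simp_all
  from assms[OF this] obtain F2 where F2: "F2 \<subseteq> edges H" "finite F2" "X \<subseteq> \<Union>F2" "card F2 \<le> card F"
    by (elim exE conjE)
  have "F2 \<in> {F. F \<subseteq> edges H \<and> finite F \<and> X \<subseteq> \<Union> F}" using F2 by simp
  moreover have "enat (card F2) \<le> enat (card F)" using F2(4) by simp
  ultimately show "\<exists>F2\<in>{F. F \<subseteq> edges H \<and> finite F \<and> X \<subseteq> \<Union> F}. enat (card F2) \<le> enat (card F)"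
    by (rule bexI[rotated])
qed

lemma conn_lift:
  assumes "(\<lambda>a b. a \<in> S \<and> b \<in> S \<and> adj TE a b)\<^sup>*\<^sup>* x y" "S \<subseteq> S'"
  shows "(\<lambda>a b. a \<in> S' \<and> b \<in> S' \<and> adj TE a b)\<^sup>*\<^sup>* x y"
  using assms(1)
proof (induction rule: rtranclp_induct)
  case base then show ?case by simp
next
  case (step y z)
  then have "(\<lambda>a b. a \<in> S' \<and> b \<in> S' \<and> adj TE a b) y z" using assms(2) by auto
  with step(3) show ?case by (rule rtranclp.rtrancl_into_rtrancl)
qed

lemma conn_union:
  assumes c1: "connected_on TE S1" and c2: "connected_on TE S2" and w1: "w \<in> S1" and w2: "w \<in> S2"
  shows "connected_on TE (S1 \<union> S2)"
  unfolding connected_on_def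
proof (intro ballI)
  fix x y assume x: "x \<in> S1 \<union> S2" and y: "y \<in> S1 \<union> S2"
  let ?R = "\<lambda>a b. a \<in> S1 \<union> S2 \<and> b \<in> S1 \<union> S2 \<and> adj TE a b"
  have s1: "S1 \<subseteq> S1 \<union> S2" and s2: "S2 \<subseteq> S1 \<union> S2" by auto
  have l1: "?R\<^sup>*\<^sup>* a b" if "a \<in> S1" "b \<in> S1" for a b
    using conn_lift[OF c1[unfolded connected_on_def, rule_format, OF that] s1] .
  have l2: "?R\<^sup>*\<^sup>* a b" if "a \<in> S2" "b \<in> S2" for a b
    using conn_lift[OF c2[unfolded connected_on_def, rule_format, OF that] s2] .
  have xw: "?R\<^sup>*\<^sup>* x w"
    using x l1[OF _ w1] l2[OF _ w2] by blast
  have wy: "?R\<^sup>*\<^sup>* w y"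
    using y l1[OF w1] l2[OF w2] by blast
  show "?R\<^sup>*\<^sup>* x y" using xw wy by (rule rtranclp_trans)
qed

lemma conn_empty: "connected_on TE {}"
  by (simp add: connected_on_def)

definition inv_hg :: "'a hypergraph \<Rightarrow> bool" where
  "inv_hg H \<longleftrightarrow> (\<forall>e\<in>edges H. e \<subseteq> verts H)"

lemma step_inv: "dilute_step H G \<Longrightarrow> inv_hg H \<Longrightarrow> inv_hg G"
  by (induction rule: dilute_step.induct)
     (auto simp: inv_hg_def verts_def edges_def incident_def)

lemma del_vertex_td:
  assumes "v \<in> verts H'" "tree_decomposition H' N TE B"
  shows "\<exists>B2. tree_decomposition (verts H' - {v}, (\<lambda>e. e - {v}) ` edges H') N TE B2 \<and>
     (\<forall>u\<in>N. rho (verts H' - {v}, (\<lambda>e. e - {v}) ` edges H') (B2 u) \<le> rho H' (B u))"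
proof (intro exI[of _ "\<lambda>u. B u - {v}"] conjI ballI)
  let ?G = "(verts H' - {v}, (\<lambda>e. e - {v}) ` edges H')"
  show "tree_decomposition ?G N TE (\<lambda>u. B u - {v})"
    unfolding tree_decomposition_def
  proof (intro conjI ballI)
    show "is_tree N TE" using assms by (simp add: tree_decomposition_def)
    fix u assume "u \<in> N" then show "B u - {v} \<subseteq> verts ?G"
      using assms by (auto simp: tree_decomposition_def verts_def)
  next
    fix e assume "e \<in> edges ?G"
    then obtain e' where "e' \<in> edges H'" "e = e' - {v}" by (auto simp: edges_def)
    then obtain u where "u \<in> N" "e' \<subseteq> B u" using assms by (auto simp: tree_decomposition_def)
    then show "\<exists>u\<in>N. e \<subseteq> B u - {v}" using \<open>e = e' - {v}\<close> by blast
  next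
    fix w assume w: "w \<in> verts ?G"
    then have "{u \<in> N. w \<in> B u - {v}} = {u \<in> N. w \<in> B u}" "w \<in> verts H'"
      by (auto simp: verts_def)
    then show "connected_on TE {u \<in> N. w \<in> B u - {v}}"
      using assms by (simp add: tree_decomposition_def)
  qed
next
  fix u assume "u \<in> N"
  show "rho (verts H' - {v}, (\<lambda>e. e - {v}) ` edges H') (B u - {v}) \<le> rho H' (B u)"
  proof (rule rho_le_crit)
    fix F assume F: "F \<subseteq> edges H'" "finite F" "B u \<subseteq> \<Union>F"
    show "\<exists>F2. F2 \<subseteq> edges (verts H' - {v}, (\<lambda>e. e - {v}) ` edges H') \<and> finite F2 \<and>
              B u - {v} \<subseteq> \<Union>F2 \<and> card F2 \<le> card F"
      using F by (intro exI[of _ "(\<lambda>e. e - {v}) ` F"]) (auto simp: edges_def card_image_le)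
  qed
qed

lemma del_edge_td:
  assumes "e \<in> edges H'" "f \<in> edges H'" "e \<subset> f" "tree_decomposition H' N TE B"
  shows "\<exists>B2. tree_decomposition (verts H', edges H' - {e}) N TE B2 \<and>
     (\<forall>u\<in>N. rho (verts H', edges H' - {e}) (B2 u) \<le> rho H' (B u))"
proof (intro exI[of _ B] conjI ballI)
  show "tree_decomposition (verts H', edges H' - {e}) N TE B"
    using assms(4) by (auto simp: tree_decomposition_def verts_def edges_def)
next
  fix u assume "u \<in> N"
  show "rho (verts H', edges H' - {e}) (B u) \<le> rho H' (B u)"
  proof (rule rho_le_crit)
    fix F assume F: "F \<subseteq> edges H'" "finite F" "B u \<subseteq> \<Union>F"
    show "\<exists>F2. F2 \<subseteq> edges (verts H', edges H' - {e}) \<and> finite F2 \<and>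
              B u \<subseteq> \<Union>F2 \<and> card F2 \<le> card F"
    proof (cases "e \<in> F")
      case True
      have "card (insert f (F - {e})) \<le> Suc (card (F - {e}))" by (simp add: card_insert_le_m1)
      also have "\<dots> = card F" using True F(2)
        by (metis card_Suc_Diff1)
      finally have c: "card (insert f (F - {e})) \<le> card F" .
      show ?thesis
        using F True assms(1-3) c
        by (intro exI[of _ "insert f (F - {e})"]) (auto simp: edges_def)
    next
      case False
      then show ?thesis using F by (intro exI[of _ F]) (auto simp: edges_def)
    qed
  qed
qed


lemma merge_td:
  assumes v: "v \<in> verts H'" and inv: "inv_hg H'" and td: "tree_decomposition H' N TE B"
  shows "\<exists>B2. tree_decomposition (verts H', (edges H' - incident H' v) \<union> {\<Union>(incident H' v) - {v}}) N TE B2 \<and>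
     (\<forall>u\<in>N. rho (verts H', (edges H' - incident H' v) \<union> {\<Union>(incident H' v) - {v}}) (B2 u) \<le> rho H' (B u))"
proof -
  define I where "I = incident H' v"
  define m where "m = \<Union>I - {v}"
  define G where "G = (verts H', (edges H' - I) \<union> {m})"
  define B2 where "B2 = (\<lambda>u. if v \<in> B u then (B u - {v}) \<union> m else B u)"
  have I_sub: "I \<subseteq> edges H'" by (auto simp: I_def incident_def)
  have vI: "\<And>e. e \<in> edges H' \<Longrightarrow> v \<in> e \<Longrightarrow> e \<in> I" by (auto simp: I_def incident_def)
  have Iv: "\<And>e. e \<in> I \<Longrightarrow> v \<in> e" by (auto simp: I_def incident_def)
  have m_sub: "m \<subseteq> verts H'" using inv I_sub by (auto simp: inv_hg_def m_def)
  have tree: "is_tree N TE" and Bsub: "\<forall>u\<in>N. B u \<subseteq> verts H'"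
    and cov: "\<forall>e\<in>edges H'. \<exists>u\<in>N. e \<subseteq> B u"
    and con: "\<forall>w\<in>verts H'. connected_on TE {u \<in> N. w \<in> B u}"
    using td by (auto simp: tree_decomposition_def)
  have Nne: "N \<noteq> {}" using tree by (simp add: is_tree_def)
  have tdG: "tree_decomposition G N TE B2"
    unfolding tree_decomposition_def
  proof (intro conjI ballI)
    show "is_tree N TE" by (rule tree)
    fix u assume "u \<in> N" then show "B2 u \<subseteq> verts G"
      using Bsub m_sub by (auto simp: B2_def G_def verts_def)
  next
    fix e assume "e \<in> edges G"
    then have "e \<in> edges H' - I \<or> e = m" by (auto simp: G_def edges_def)
    then show "\<exists>u\<in>N. e \<subseteq> B2 u"
    proof
      assume e: "e \<in> edges H' - I"
      then obtain u where "u \<in> N" "e \<subseteq> B u" using cov by auto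
      moreover have "v \<notin> e" using e vI by auto
      ultimately show ?thesis by (intro bexI[of _ u]) (auto simp: B2_def)
    next
      assume em: "e = m"
      show ?thesis
      proof (cases "I = {}")
        case True
        then show ?thesis using Nne em by (auto simp: m_def)
      next
        case False
        then obtain e0 where e0: "e0 \<in> I" by auto
        have "e0 \<in> edges H'" using e0 I_sub by auto
        then obtain u where "u \<in> N" "e0 \<subseteq> B u" using cov by blast
        moreover have "v \<in> B u" using Iv e0 \<open>e0 \<subseteq> B u\<close> by auto
        ultimately show ?thesis using em by (intro bexI[of _ u]) (auto simp: B2_def)
      qed
    qed
  next
    fix w assume w: "w \<in> verts G"
    then have wH: "w \<in> verts H'" by (simp add: G_def verts_def)
    show "connected_on TE {u \<in> N. w \<in> B2 u}"
    proof (cases "w = v")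
      case True
      then have "{u \<in> N. w \<in> B2 u} = {}" by (auto simp: B2_def m_def)
      then show ?thesis using conn_empty by metis
    next
      case False
      show ?thesis
      proof (cases "w \<in> m")
        case True
        then obtain e0 where e0: "e0 \<in> I" "w \<in> e0" by (auto simp: m_def)
        have "e0 \<in> edges H'" using e0(1) I_sub by auto
        then obtain u0 where u0: "u0 \<in> N" "e0 \<subseteq> B u0" using cov by blast
        have "v \<in> B u0" using Iv e0 u0 by auto
        have eq: "{u \<in> N. w \<in> B2 u} = {u \<in> N. w \<in> B u} \<union> {u \<in> N. v \<in> B u}"
          using True False by (auto simp: B2_def)
        show ?thesis unfolding eq
          by (rule conn_union[where w = u0]) (use con wH v u0 e0 \<open>v \<in> B u0\<close> in auto)
      next
        case nm: False
        have eq: "{u \<in> N. w \<in> B2 u} = {u \<in> N. w \<in> B u}"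
          using nm False by (auto simp: B2_def)
        show ?thesis unfolding eq using con wH by auto
      qed
    qed
  qed
  have rhoG: "rho G (B2 u) \<le> rho H' (B u)" if "u \<in> N" for u
  proof (rule rho_le_crit)
    fix F assume F: "F \<subseteq> edges H'" "finite F" "B u \<subseteq> \<Union>F"
    show "\<exists>F2. F2 \<subseteq> edges G \<and> finite F2 \<and> B2 u \<subseteq> \<Union>F2 \<and> card F2 \<le> card F"
    proof (cases "F \<inter> I = {}")
      case True
      then have "v \<notin> B u" using F vI by blast
      then have "B2 u = B u" by (simp add: B2_def)
      then show ?thesis using F True
        by (intro exI[of _ F]) (auto simp: G_def edges_def)
    next
      case False
      define F2 where "F2 = insert m (F - I)"
      have "card F2 \<le> Suc (card (F - I))" by (simp add: F2_def card_insert_le_m1)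
      also have "card F = card (F - I) + card (F \<inter> I)"
        using card_Int_Diff[OF F(2), of I] by simp
      moreover have "card (F \<inter> I) \<ge> 1" using False F(2)
        by (simp add: Suc_le_eq card_gt_0_iff)
      ultimately have c: "card F2 \<le> card F" by linarith
      have "B2 u \<subseteq> \<Union>F2"
      proof
        fix x assume x: "x \<in> B2 u"
        show "x \<in> \<Union>F2"
        proof (cases "x \<in> m")
          case True then show ?thesis by (simp add: F2_def)
        next
          case xm: False
          then have "x \<in> B u" "x \<noteq> v" using x by (auto simp: B2_def split: if_splits)
          then obtain e where "e \<in> F" "x \<in> e" using F by auto
          then show ?thesis using xm \<open>x \<noteq> v\<close> by (auto simp: F2_def m_def)
        qed
      qed
      then show ?thesis using F c
        by (intro exI[of _ F2]) (auto simp: F2_def G_def edges_def)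
    qed
  qed
  show ?thesis using tdG rhoG unfolding G_def m_def I_def by blast
qed


lemma iso_ghw:
  fixes H :: "'a hypergraph" and G :: "'b hypergraph"
  assumes iso: "hg_iso H G" and inv: "inv_hg H"
  shows "ghw H \<le> ghw G"
proof (rule ghw_le_crit)
  obtain f where bij: "bij_betw f (verts H) (verts G)" and eG: "edges G = (\<lambda>e. f ` e) ` edges H"
    using iso by (auto simp: hg_iso_def)
  define g where "g = inv_into (verts H) f"
  have inj: "inj_on f (verts H)" and surj: "f ` verts H = verts G"
    using bij by (auto simp: bij_betw_def)
  have gf: "\<And>x. x \<in> verts H \<Longrightarrow> g (f x) = x" using inj by (simp add: g_def)
  have fg: "\<And>y. y \<in> verts G \<Longrightarrow> f (g y) = y" using surj by (auto simp: g_def f_inv_into_f)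
  have gG: "\<And>y. y \<in> verts G \<Longrightarrow> g y \<in> verts H" using surj by (auto simp: g_def inv_into_into)
  have fH: "\<And>x. x \<in> verts H \<Longrightarrow> f x \<in> verts G" using surj by auto
  have gfe: "\<And>e. e \<in> edges H \<Longrightarrow> g ` f ` e = e"
    using inv inj by (auto simp: inv_hg_def g_def inv_into_image_cancel)
  fix N TE B assume td: "tree_decomposition G N TE B"
  have tree: "is_tree N TE" and Bsub: "\<forall>u\<in>N. B u \<subseteq> verts G"
    and cov: "\<forall>e\<in>edges G. \<exists>u\<in>N. e \<subseteq> B u"
    and con: "\<forall>w\<in>verts G. connected_on TE {u \<in> N. w \<in> B u}"
    using td by (auto simp: tree_decomposition_def)
  show "\<exists>B2. tree_decomposition H N TE B2 \<and> (\<forall>u\<in>N. rho H (B2 u) \<le> rho G (B u))"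
  proof (intro exI[of _ "\<lambda>u. g ` B u"] conjI ballI)
    show "tree_decomposition H N TE (\<lambda>u. g ` B u)"
      unfolding tree_decomposition_def
    proof (intro conjI ballI)
      show "is_tree N TE" by (rule tree)
      fix u assume "u \<in> N" then show "g ` B u \<subseteq> verts H" using Bsub gG by auto
    next
      fix e assume e: "e \<in> edges H"
      then have "f ` e \<in> edges G" using eG by auto
      then obtain u where "u \<in> N" "f ` e \<subseteq> B u" using cov by blast
      then have "g ` f ` e \<subseteq> g ` B u" by auto
      then show "\<exists>u\<in>N. e \<subseteq> g ` B u" using gfe[OF e] \<open>u \<in> N\<close> by auto
    next
      fix w assume w: "w \<in> verts H"
      have "{u \<in> N. w \<in> g ` B u} = {u \<in> N. f w \<in> B u}"
      proof (intro Collect_cong conj_cong refl iffI)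
        fix u assume "u \<in> N" "w \<in> g ` B u"
        then obtain y where "y \<in> B u" "w = g y" by auto
        moreover have "y \<in> verts G" using Bsub \<open>u \<in> N\<close> \<open>y \<in> B u\<close> by auto
        ultimately show "f w \<in> B u" using fg by simp
      next
        fix u assume "u \<in> N" "f w \<in> B u"
        then show "w \<in> g ` B u" using gf[OF w] by (metis imageI)
      qed
      then show "connected_on TE {u \<in> N. w \<in> g ` B u}" using con fH[OF w] by auto
    qed
  next
    fix u assume "u \<in> N"
    show "rho H (g ` B u) \<le> rho G (B u)"
    proof (rule rho_le_crit)
      fix F assume F: "F \<subseteq> edges G" "finite F" "B u \<subseteq> \<Union>F"
      have "(\<lambda>e. g ` e) ` F \<subseteq> edges H"
      proof
        fix x assume "x \<in> (\<lambda>e. g ` e) ` F"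
        then obtain e where "e \<in> F" "x = g ` e" by auto
        then obtain e' where "e' \<in> edges H" "e = f ` e'" using F eG by auto
        then show "x \<in> edges H" using gfe \<open>x = g ` e\<close> by auto
      qed
      moreover have "g ` B u \<subseteq> \<Union>((\<lambda>e. g ` e) ` F)" using F(3) by blast
      ultimately show "\<exists>F2. F2 \<subseteq> edges H \<and> finite F2 \<and> g ` B u \<subseteq> \<Union>F2 \<and> card F2 \<le> card F"
        using F by (intro exI[of _ "(\<lambda>e. g ` e) ` F"]) (auto simp: card_image_le)
    qed
  qed
qed

lemma step_ghw:
  assumes "dilute_step H' G" "inv_hg H'"
  shows "ghw G \<le> ghw H'"
  using assms
proof (induction rule: dilute_step.induct)
  case (del_vertex v H)
  show ?case
    by (rule ghw_le_crit[where H'=H]) (rule del_vertex_td[OF del_vertex(1)])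
next
  case (del_edge e H f)
  show ?case
    by (rule ghw_le_crit[where H'=H]) (rule del_edge_td[OF del_edge(1,2,3)])
next
  case (merge v H)
  show ?case
    by (rule ghw_le_crit[where H'=H]) (rule merge_td[OF merge(1,2)])
qed

lemma steps_ghw:
  assumes "dilute_step\<^sup>*\<^sup>* H' G" "inv_hg H'"
  shows "ghw G \<le> ghw H' \<and> inv_hg G"
  using assms(1)
proof (induction rule: rtranclp_induct)
  case base then show ?case using assms(2) by simp
next
  case (step y z)
  have "ghw z \<le> ghw y" using step_ghw[OF step(2)] step(3) by blast
  moreover have "inv_hg z" using step_inv[OF step(2)] step(3) by blast
  ultimately show ?case using step(3) by (meson order_trans)
qed

theorem theorem3p2:
  fixes H :: "'a hypergraph" and H' :: "'b hypergraph"
  assumes "hypergraph H" and "hypergraph H'"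
    and "dilution H H'"
  shows "ghw H \<le> ghw H'"
proof -
  obtain G where G: "dilute_step\<^sup>*\<^sup>* H' G" "hg_iso H G" using assms(3) by (auto simp: dilution_def)
  have "inv_hg H'" "inv_hg H" using assms(1,2) by (auto simp: hypergraph_def inv_hg_def)
  then have "ghw G \<le> ghw H'" using steps_ghw G(1) by blast
  moreover have "ghw H \<le> ghw G" using iso_ghw G(2) \<open>inv_hg H\<close> by blast
  ultimately show ?thesis by (rule order_trans[rotated])
qed

end
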